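(* Let $U=\sum_{j=0}^3c_j\sigma_j\otimes\sigma_j$ be a normalized two-qubit unitary with parameters $x=\pi/4$ and $y=z$. Write $E(\alpha,\beta):=E(\varphi(\alpha,\beta;\frac{\pi}{2},\frac{\pi}{2}))$. Then $$\max_{\alpha\in[0,\pi/4],\ \beta\in[0,\pi/2]}E(\alpha,\beta)=E(\tfrac{\pi}{4},\tfrac{\pi}{4})=H(|c_0|^2,|c_0|^2,|c_2|^2,|c_2|^2).$$
   Context: Pauli matrices: $\sigma_0=I$, $\sigma_1=\begin{pmatrix}0&1\\1&0\end{pmatrix}$, $\sigma_2=\begin{pmatrix}0&-i\\i&0\end{pmatrix}$, $\sigma_3=\begin{pmatrix}1&0\\0&-1\end{pmatrix}$. For real $x,y,z$ set $c_0=\cos x\cos y\cos z+i\sin x\sin y\sin z$, $c_1=\cos x\sin y\sin z+i\sin x\cos y\cos z$, $c_2=\sin x\cos y\sin z+i\cos x\sin y\cos z$, $c_3=\sin x\sin y\cos z+i\cos x\cos y\sin z$, and $U=\sum_{j=0}^3c_j\sigma_j\otimes\sigma_j$ acting on qubits $A,B$. $U$ is called normalized if $\pi/4\ge x\ge y\ge z\ge0$ and $0<y<\pi/4$. $E(\varphi(\alpha,\beta;\frac{\pi}{2},\frac{\pi}{2}))$ denotes the entanglement entropy $S(\mathrm{Tr}_{AR_A}|\chi\rangle\langle\chi|)$ (von Neumann entropy, base-2 logarithm) of $|\chi\rangle=U\big((\cos\alpha|00\rangle+\sin\alpha|11\rangle)_{AR_A}\otimes(\cos\beta|00\rangle+\sin\beta|11\rangle)_{BR_B}\big)$,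 with $R_A,R_B$ qubits. $H$ is the base-2 Shannon entropy. *)

theory Defs
  imports "Jordan_Normal_Form.Char_Poly" "HOL-Computational_Algebra.Polynomial"
begin

definition pauli :: "nat \<Rightarrow> nat \<Rightarrow> nat \<Rightarrow> complex" where
  "pauli j r s =
     (if j = 0 then (if r = s then 1 else 0)
      else if j = 1 then (if r \<noteq> s then 1 else 0)
      else if j = 2 then (if r = 0 \<and> s = 1 then - \<i> else if r = 1 \<and> s = 0 then \<i> else 0)
      else (if r = s then (if r = 0 then 1 else -1) else 0))"

definition coef :: "real \<Rightarrow> real \<Rightarrow> real \<Rightarrow> nat \<Rightarrow> complex" where
  "coef x y z j =
     (if j = 0 then Complex (cos x * cos y * cos z) (sin x * sin y * sin z)
      else if j = 1 then Complex (cos x * sin y * sin z) (sin x * cos y * cos z)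
      else if j = 2 then Complex (sin x * cos y * sin z) (cos x * sin y * cos z)
      else Complex (sin x * sin y * cos z) (cos x * cos y * sin z))"

text \<open>Matrix entry of U = sum_j c_j sigma_j (x) sigma_j, row (a',b'), column (a,b).\<close>
definition Uent :: "real \<Rightarrow> real \<Rightarrow> real \<Rightarrow> nat \<Rightarrow> nat \<Rightarrow> nat \<Rightarrow> nat \<Rightarrow> complex" where
  "Uent x y z a' b' a b = (\<Sum>j<4. coef x y z j * pauli j a' a * pauli j b' b)"

definition normalized :: "real \<Rightarrow> real \<Rightarrow> real \<Rightarrow> bool" where
  "normalized x y z \<longleftrightarrow> pi/4 \<ge> x \<and> x \<ge> y \<and> y \<ge> z \<and> z \<ge> 0 \<and> 0 < y \<and> y < pi/4"

definition pstate :: "real \<Rightarrow> nat \<Rightarrow> nat \<Rightarrow> complex" where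
  "pstate t q r = (if q = 0 \<and> r = 0 then complex_of_real (cos t)
                   else if q = 1 \<and> r = 1 then complex_of_real (sin t) else 0)"

text \<open>Amplitude of chi = U (psi_alpha (x) psi_beta) at basis state |a, ra>_{A R_A} |b, rb>_{B R_B}.\<close>
definition chi :: "real \<Rightarrow> real \<Rightarrow> real \<Rightarrow> real \<Rightarrow> real \<Rightarrow> nat \<Rightarrow> nat \<Rightarrow> nat \<Rightarrow> nat \<Rightarrow> complex" where
  "chi x y z \<alpha> \<beta> a ra b rb =
     (\<Sum>a0<2. \<Sum>b0<2. Uent x y z a b a0 b0 * pstate \<alpha> a0 ra * pstate \<beta> b0 rb)"

text \<open>Reduced density matrix Tr_{A R_A} |chi><chi| on B R_B; index i encodes (b, rb) as 2*b + rb.\<close>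
definition rhoBR :: "real \<Rightarrow> real \<Rightarrow> real \<Rightarrow> real \<Rightarrow> real \<Rightarrow> complex mat" where
  "rhoBR x y z \<alpha> \<beta> = mat 4 4 (\<lambda>(i, k).
     \<Sum>a<2. \<Sum>ra<2. chi x y z \<alpha> \<beta> a ra (i div 2) (i mod 2) * cnj (chi x y z \<alpha> \<beta> a ra (k div 2) (k mod 2)))"

text \<open>Von Neumann entropy (base 2): eigenvalues with multiplicity are the roots of the
  characteristic polynomial; 0 log 0 = 0 holds since log 2 0 = 0 in Isabelle.\<close>
definition vn_entropy :: "complex mat \<Rightarrow> real" where
  "vn_entropy \<rho> = - sum_mset (image_mset (\<lambda>e. Re e * log 2 (Re e)) (proots (char_poly \<rho>)))"

definition ent :: "real \<Rightarrow> real \<Rightarrow> real \<Rightarrow> real \<Rightarrow> real \<Rightarrow> real" where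
  "ent x y z \<alpha> \<beta> = vn_entropy (rhoBR x y z \<alpha> \<beta>)"

definition shannon :: "real list \<Rightarrow> real" where
  "shannon ps = - (\<Sum>p\<leftarrow>ps. p * log 2 p)"

end

theory Submission imports Defs begin


lemma sum2: "(\<Sum>i<2. f i) = f 0 + f (1::nat)" by (simp add: numeral_eq_Suc)
lemma sum4: "(\<Sum>i<4. f i) = f 0 + f 1 + f 2 + f (3::nat)" by (simp add: numeral_eq_Suc)

lemma Uent_vals:
  "Uent x y z 0 0 0 0 = coef x y z 0 + coef x y z 3"
  "Uent x y z 1 1 1 1 = coef x y z 0 + coef x y z 3"
  "Uent x y z 1 1 0 0 = coef x y z 1 - coef x y z 2"
  "Uent x y z 0 0 1 1 = coef x y z 1 - coef x y z 2"
  "Uent x y z 0 1 0 1 = coef x y z 0 - coef x y z 3"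
  "Uent x y z 1 0 1 0 = coef x y z 0 - coef x y z 3"
  "Uent x y z 1 0 0 1 = coef x y z 1 + coef x y z 2"
  "Uent x y z 0 1 1 0 = coef x y z 1 + coef x y z 2"
  "Uent x y z 0 0 0 1 = 0" "Uent x y z 0 0 1 0 = 0"
  "Uent x y z 1 1 0 1 = 0" "Uent x y z 1 1 1 0 = 0"
  "Uent x y z 0 1 0 0 = 0" "Uent x y z 0 1 1 1 = 0"
  "Uent x y z 1 0 0 0 = 0" "Uent x y z 1 0 1 1 = 0"
  by (simp_all add: Uent_def sum4 pauli_def mult.assoc)

lemmas Uent_vals' = Uent_vals[unfolded One_nat_def]

lemma chi_eq:
  assumes "ra < 2" "rb < 2"
  shows "chi x y z \<alpha> \<beta> a ra b rb = Uent x y z a b ra rb *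
     complex_of_real (if ra = 0 then cos \<alpha> else sin \<alpha>) * complex_of_real (if rb = 0 then cos \<beta> else sin \<beta>)"
  using assms unfolding chi_def
  by (cases ra; cases rb; simp add: sum2 pstate_def less_2_cases_iff)

definition Fl :: "real \<Rightarrow> real \<Rightarrow> real \<Rightarrow> real \<Rightarrow> real \<Rightarrow> nat \<times> nat \<Rightarrow> complex" where
  "Fl x y z \<alpha> \<beta> = (\<lambda>(i, k).
     \<Sum>a<2. \<Sum>ra<2. chi x y z \<alpha> \<beta> a ra (i div 2) (i mod 2) * cnj (chi x y z \<alpha> \<beta> a ra (k div 2) (k mod 2)))"

lemma rho_Fl: "rhoBR x y z \<alpha> \<beta> = mat 4 4 (Fl x y z \<alpha> \<beta>)"
  unfolding rhoBR_def Fl_def ..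

lemma Fl_zero:
  "Fl x y z \<alpha> \<beta> (0,1) = 0" "Fl x y z \<alpha> \<beta> (0,2) = 0" "Fl x y z \<alpha> \<beta> (1,0) = 0" "Fl x y z \<alpha> \<beta> (2,0) = 0"
  "Fl x y z \<alpha> \<beta> (1,3) = 0" "Fl x y z \<alpha> \<beta> (3,1) = 0" "Fl x y z \<alpha> \<beta> (2,3) = 0" "Fl x y z \<alpha> \<beta> (3,2) = 0"
  by (simp_all add: Fl_def sum2 chi_eq Uent_vals')


lemma Fl_entries:
  fixes x y z \<alpha> \<beta> :: real
  defines "P \<equiv> coef x y z 0 + coef x y z 3" and "R \<equiv> coef x y z 0 - coef x y z 3"
  and "Q \<equiv> coef x y z 1 - coef x y z 2" and "S \<equiv> coef x y z 1 + coef x y z 2"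
  and "ca \<equiv> complex_of_real (cos \<alpha>)" and "sa \<equiv> complex_of_real (sin \<alpha>)"
  and "cb \<equiv> complex_of_real (cos \<beta>)" and "sb \<equiv> complex_of_real (sin \<beta>)"
  shows "Fl x y z \<alpha> \<beta> (0,0) = (P*ca*cb)*(cnj P*ca*cb) + (R*sa*cb)*(cnj R*sa*cb)"
  "Fl x y z \<alpha> \<beta> (3,3) = (R*ca*sb)*(cnj R*ca*sb) + (P*sa*sb)*(cnj P*sa*sb)"
  "Fl x y z \<alpha> \<beta> (0,3) = (P*ca*cb)*(cnj R*ca*sb) + (R*sa*cb)*(cnj P*sa*sb)"
  "Fl x y z \<alpha> \<beta> (3,0) = (R*ca*sb)*(cnj P*ca*cb) + (P*sa*sb)*(cnj R*sa*cb)"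
  "Fl x y z \<alpha> \<beta> (1,1) = (Q*sa*sb)*(cnj Q*sa*sb) + (S*ca*sb)*(cnj S*ca*sb)"
  "Fl x y z \<alpha> \<beta> (2,2) = (S*sa*cb)*(cnj S*sa*cb) + (Q*ca*cb)*(cnj Q*ca*cb)"
  "Fl x y z \<alpha> \<beta> (1,2) = (Q*sa*sb)*(cnj S*sa*cb) + (S*ca*sb)*(cnj Q*ca*cb)"
  "Fl x y z \<alpha> \<beta> (2,1) = (S*sa*cb)*(cnj Q*sa*sb) + (Q*ca*cb)*(cnj S*ca*sb)"
  unfolding P_def R_def Q_def S_def ca_def sa_def cb_def sb_def
  by (simp_all add: Fl_def sum2 chi_eq Uent_vals')


lemma mat_delete_mat0:
  "mat_delete (mat (Suc n) (Suc n) f) 0 j =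
   mat n n (\<lambda>(i',j'). f (Suc i', if j' < j then j' else Suc j'))"
  unfolding mat_delete_def by (rule eq_matI) auto

lemma det_mat_Suc:
  fixes f :: "nat \<times> nat \<Rightarrow> 'a::comm_ring_1"
  shows "det (mat (Suc n) (Suc n) f) =
   (\<Sum>j<Suc n. f(0,j) * (-1)^j * det (mat n n (\<lambda>(i',j'). f (Suc i', if j' < j then j' else Suc j'))))"
  apply (subst laplace_expansion_row[of _ "Suc n" 0])
    apply auto[2]
  apply (rule sum.cong[OF refl])
  apply (simp add: cofactor_def mat_delete_mat0)
  done

lemma det4:
  fixes f :: "nat \<times> nat \<Rightarrow> 'a::comm_ring_1"
  assumes "f(0,1)=0" "f(0,2)=0" "f(1,0)=0" "f(2,0)=0" "f(1,3)=0" "f(3,1)=0" "f(2,3)=0" "f(3,2)=0"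
  shows "det (mat 4 4 f) = (f(0,0)*f(3,3) - f(0,3)*f(3,0)) * (f(1,1)*f(2,2) - f(1,2)*f(2,1))"
  using assms by (simp add: numeral_eq_Suc det_mat_Suc algebra_simps)

lemma quad:
  fixes a b c d :: "'a::comm_ring_1"
  shows "([:0,1:] + [:-a:]) * ([:0,1:] + [:-d:]) - [:-b:]*[:-c:] = [:a*d-b*c, -(a+d), 1:]"
  by (simp add: algebra_simps)

lemma cp4:
  fixes f :: "nat \<times> nat \<Rightarrow> 'a::comm_ring_1"
  assumes "f(0,1)=0" "f(0,2)=0" "f(1,0)=0" "f(2,0)=0" "f(1,3)=0" "f(3,1)=0" "f(2,3)=0" "f(3,2)=0"
  shows "char_poly (mat 4 4 f) = [:f(0,0)*f(3,3) - f(0,3)*f(3,0), -(f(0,0)+f(3,3)), 1:]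
     * [:f(1,1)*f(2,2) - f(1,2)*f(2,1), -(f(1,1)+f(2,2)), 1:]"
proof -
  let ?g = "\<lambda>(i,k). (if i = k then [:0,1:] else 0) + [:- f(i,k):]"
  have "char_poly_matrix (mat 4 4 f) = mat 4 4 ?g"
    unfolding char_poly_matrix_def by (rule eq_matI) auto
  hence "char_poly (mat 4 4 f) = det (mat 4 4 ?g)" unfolding char_poly_def by simp
  also have "\<dots> = (?g(0,0)*?g(3,3) - ?g(0,3)*?g(3,0)) * (?g(1,1)*?g(2,2) - ?g(1,2)*?g(2,1))"
    by (rule det4) (simp_all add: assms[unfolded One_nat_def])
  finally show ?thesis by (simp add: quad, simp add: algebra_simps)
qed



definition lamp :: "real \<Rightarrow> real \<Rightarrow> real" where "lamp T D = (T + sqrt (T^2 - 4*D))/2"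
definition lamm :: "real \<Rightarrow> real \<Rightarrow> real" where "lamm T D = (T - sqrt (T^2 - 4*D))/2"

lemma gibbs_term:
  fixes l m :: real
  assumes "0 \<le> l" "0 < m"
  shows "- (l * log 2 l) \<le> - (l * log 2 m) + (m - l) / ln 2"
proof (cases "l = 0")
  case True then show ?thesis using assms by simp
next
  case False
  hence l: "0 < l" using assms by simp
  have "ln (m / l) \<le> m / l - 1" using l assms by (intro ln_le_minus_one) simp
  hence "l * ln (m / l) \<le> l * (m / l - 1)" using l by (simp add: mult_left_mono)
  moreover have "ln (m/l) = ln m - ln l" using l assms by (simp add: ln_div)
  moreover have "l*(m/l - 1) = m - l" using l by (simp add: field_simps)
  ultimately have "l * (ln m - ln l) \<le> m - l" by simp
  hence "l * (ln m - ln l) / ln 2 \<le> (m - l) / ln 2" by (simp add: divide_right_mono)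
  thus ?thesis by (simp add: log_def field_simps)
qed

lemma cs_bound:
  fixes a1 a2 b1 b2 :: real
  assumes a: "a1^2+a2^2=1" and b: "b1^2+b2^2=1"
  shows "\<bar>4*a1*a2*b1*b2\<bar> + \<bar>(a1^2-a2^2)*(b1^2-b2^2)\<bar> \<le> 1"
proof -
  define X where "X = a1^2-a2^2"
  define Y where "Y = 2*a1*a2"
  define X' where "X' = b1^2-b2^2"
  define Y' where "Y' = 2*b1*b2"
  have "X^2+Y^2 = (a1^2+a2^2)^2" unfolding X_def Y_def by (simp add: power2_eq_square algebra_simps)
  hence XY: "X^2+Y^2 = 1" using a by simp
  have "X'^2+Y'^2 = (b1^2+b2^2)^2" unfolding X'_def Y'_def by (simp add: power2_eq_square algebra_simps)
  hence XY': "X'^2+Y'^2 = 1" using b by simp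
  have "2*(\<bar>X*Y'\<bar>*\<bar>Y*X'\<bar>) \<le> \<bar>X*Y'\<bar>^2 + \<bar>Y*X'\<bar>^2"
  proof -
    have "0 \<le> (\<bar>X*Y'\<bar> - \<bar>Y*X'\<bar>)^2" by simp
    thus ?thesis unfolding power2_diff by linarith
  qed
  hence "(\<bar>Y*Y'\<bar> + \<bar>X*X'\<bar>)^2 \<le> (X^2+Y^2)*(X'^2+Y'^2)"
    by (simp add: power2_sum abs_mult power_mult_distrib algebra_simps)
  hence "(\<bar>Y*Y'\<bar> + \<bar>X*X'\<bar>)^2 \<le> 1^2" using XY XY' by simp
  hence "\<bar>Y*Y'\<bar> + \<bar>X*X'\<bar> \<le> 1" by (rule power2_le_imp_le) simp
  thus ?thesis unfolding X_def Y_def X'_def Y'_def by (simp add: algebra_simps)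
qed


lemma key_ident:
  fixes t w aw e :: real
  assumes "e = 1 - t^2"
  shows "(1+t*w)^2 - (1-aw)^2*(1-e^2) - ((1-aw)*e + aw + t*w)^2 = 2*(1-aw)*(1-e)*(aw+t*w)"
  by (simp add: power2_eq_square algebra_simps)

lemma main_ineq:
  fixes t a1 a2 b1 b2 :: real
  assumes t: "0 < t" "t \<le> 1" and a: "a1^2+a2^2=1" and b: "b1^2+b2^2=1"
  defines "A \<equiv> 1/2 - t^2/4" and "B \<equiv> t^2/4" and "w \<equiv> (a1^2-a2^2)*(b1^2-b2^2)"
    and "D \<equiv> 16*a1^2*a2^2*b1^2*b2^2*(1/2 - t^2/4)*(t^2/4)" and "T1 \<equiv> (1+t*((a1^2-a2^2)*(b1^2-b2^2)))/2" and "T2 \<equiv> (1-t*((a1^2-a2^2)*(b1^2-b2^2)))/2"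
  shows "0 \<le> T1^2 - 4*D" "0 \<le> T2^2 - 4*D" "- (lamp T1 D * log 2 (lamp T1 D) + lamm T1 D * log 2 (lamm T1 D)
           + lamp T2 D * log 2 (lamp T2 D) + lamm T2 D * log 2 (lamm T2 D))
         \<le> - (2 * (A * log 2 A) + 2 * (B * log 2 B))"
proof -
  have T1w: "T1 = (1+t*w)/2" unfolding T1_def w_def ..
  have T2w: "T2 = (1-t*w)/2" unfolding T2_def w_def ..
  define u where "u = 4*a1*a2*b1*b2"
  have cs: "\<bar>u\<bar> + \<bar>w\<bar> \<le> 1" unfolding u_def w_def by (rule cs_bound[OF a b])
  have t2: "t^2 \<le> 1" using t by (simp add: power_le_one)
  have tw: "\<bar>t*w\<bar> \<le> \<bar>w\<bar>" using t by (simp add: abs_mult mult_left_le_one_le)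
  have Bpos: "0 < B" unfolding B_def using t by simp
  have Apos: "0 < A" unfolding A_def using t2 by simp
  have BA: "B \<le> A" unfolding A_def B_def using t2 by simp
  have AB: "A + B = 1/2" unfolding A_def B_def by simp
  define e where "e = 1 - t^2"
  have e01: "0 \<le> e" "e \<le> 1" unfolding e_def using t2 by auto
  have AB16: "16*A*B = 1 - e^2" unfolding A_def B_def e_def by (simp add: power2_eq_square algebra_simps)
  have Du: "D = u^2*A*B" unfolding D_def u_def A_def B_def by (simp add: power2_eq_square algebra_simps)
  have uw: "u^2 \<le> (1-\<bar>w\<bar>)^2"
  proof -
    have "\<bar>u\<bar> \<le> 1 - \<bar>w\<bar>" using cs by simp
    hence "\<bar>u\<bar>^2 \<le> (1-\<bar>w\<bar>)^2" by (rule power_mono) simp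
    thus ?thesis by simp
  qed
  have D0: "0 \<le> D" unfolding Du using Apos Bpos by simp
  have Dmax: "16*D \<le> (1-\<bar>w\<bar>)^2*(1-e^2)"
  proof -
    have "16*D = u^2*(16*A*B)" unfolding Du by simp
    also have "\<dots> \<le> (1-\<bar>w\<bar>)^2*(16*A*B)" using uw Apos Bpos by (intro mult_right_mono) auto
    finally show ?thesis using AB16 by simp
  qed
  define L1 where "L1 = ((1-\<bar>w\<bar>)*e + \<bar>w\<bar> + t*w)/2"
  define L2 where "L2 = ((1-\<bar>w\<bar>)*e + \<bar>w\<bar> + t*(-w))/2"
  have k1: "L1^2 \<le> T1^2 - 4*D"
  proof -
    have "(1+t*w)^2 - (1-\<bar>w\<bar>)^2*(1-e^2) - ((1-\<bar>w\<bar>)*e + \<bar>w\<bar> + t*w)^2 = 2*(1-\<bar>w\<bar>)*(1-e)*(\<bar>w\<bar>+t*w)"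
      by (rule key_ident[OF e_def])
    moreover have "0 \<le> 2*(1-\<bar>w\<bar>)*(1-e)*(\<bar>w\<bar>+t*w)" using cs e01 tw by (intro mult_nonneg_nonneg) auto
    ultimately have "((1-\<bar>w\<bar>)*e + \<bar>w\<bar> + t*w)^2 \<le> (1+t*w)^2 - (1-\<bar>w\<bar>)^2*(1-e^2)" by linarith
    thus ?thesis using Dmax unfolding L1_def T1w by (simp add: power_divide)
  qed
  have k2: "L2^2 \<le> T2^2 - 4*D"
  proof -
    have "(1+t*(-w))^2 - (1-\<bar>w\<bar>)^2*(1-e^2) - ((1-\<bar>w\<bar>)*e + \<bar>w\<bar> + t*(-w))^2 = 2*(1-\<bar>w\<bar>)*(1-e)*(\<bar>w\<bar>+t*(-w))"
      by (rule key_ident[OF e_def])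
    moreover have "0 \<le> 2*(1-\<bar>w\<bar>)*(1-e)*(\<bar>w\<bar>+t*(-w))" using cs e01 tw by (intro mult_nonneg_nonneg) auto
    ultimately have "((1-\<bar>w\<bar>)*e + \<bar>w\<bar> + t*(-w))^2 \<le> (1+t*(-w))^2 - (1-\<bar>w\<bar>)^2*(1-e^2)" by linarith
    thus ?thesis using Dmax unfolding L2_def T2w by (simp add: power_divide)
  qed
  have s1: "L1 \<le> sqrt (T1^2 - 4*D)" using k1 by (rule real_le_rsqrt)
  have s2: "L2 \<le> sqrt (T2^2 - 4*D)" using k2 by (rule real_le_rsqrt)
  have T1p: "0 \<le> T1" unfolding T1w using tw cs by auto
  have T2p: "0 \<le> T2" unfolding T2w using tw cs by auto
  have q1: "sqrt (T1^2 - 4*D) \<le> T1"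
    using D0 T1p real_sqrt_le_mono[of "T1^2 - 4*D" "T1^2"] by simp
  have q2: "sqrt (T2^2 - 4*D) \<le> T2"
    using D0 T2p real_sqrt_le_mono[of "T2^2 - 4*D" "T2^2"] by simp
  have r1: "0 \<le> sqrt (T1^2 - 4*D)" using k1 by (intro real_sqrt_ge_zero) (smt (verit) zero_le_power2)
  have r2: "0 \<le> sqrt (T2^2 - 4*D)" using k2 by (intro real_sqrt_ge_zero) (smt (verit) zero_le_power2)
  have n1a: "0 \<le> lamm T1 D" unfolding lamm_def using q1 by simp
  have n1b: "0 \<le> lamp T1 D" unfolding lamp_def using T1p r1 by simp
  note n1 = n1a n1b
  have n2a: "0 \<le> lamm T2 D" unfolding lamm_def using q2 by simp
  have n2b: "0 \<le> lamp T2 D" unfolding lamp_def using T2p r2 by simp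
  note n2 = n2a n2b
  define S where "S = lamm T1 D + lamm T2 D"
  have S2B: "S \<le> 2*B"
  proof -
    have "S = (1 - sqrt (T1^2 - 4*D) - sqrt (T2^2 - 4*D))/2"
      unfolding S_def lamm_def T1w T2w by (simp add: field_simps)
    also have "\<dots> \<le> (1 - (L1 + L2))/2" using s1 s2 by simp
    also have "\<dots> \<le> (1 - e)/2" unfolding L1_def L2_def using e01 cs
      by (simp add: field_simps mult_left_le_one_le)
    finally show ?thesis unfolding e_def B_def by simp
  qed
  have sumT: "lamp T1 D + lamm T1 D + lamp T2 D + lamm T2 D = 1"
    unfolding lamp_def lamm_def T1w T2w by (simp add: field_simps)
  have g: "- (lamp T1 D * log 2 (lamp T1 D) + lamm T1 D * log 2 (lamm T1 D)
           + lamp T2 D * log 2 (lamp T2 D) + lamm T2 D * log 2 (lamm T2 D))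
        \<le> - (lamp T1 D * log 2 A) + (A - lamp T1 D)/ln 2
          + (- (lamm T1 D * log 2 B) + (B - lamm T1 D)/ln 2)
          + (- (lamp T2 D * log 2 A) + (A - lamp T2 D)/ln 2)
          + (- (lamm T2 D * log 2 B) + (B - lamm T2 D)/ln 2)"
    using gibbs_term[OF n1(2) Apos] gibbs_term[OF n1(1) Bpos]
          gibbs_term[OF n2(2) Apos] gibbs_term[OF n2(1) Bpos] by linarith
  also have "\<dots> = - ((1 - S) * log 2 A) - S * log 2 B"
  proof -
    have "(A - lamp T1 D)/ln 2 + (B - lamm T1 D)/ln 2 + (A - lamp T2 D)/ln 2 + (B - lamm T2 D)/ln 2
        = (2*(A+B) - (lamp T1 D + lamm T1 D + lamp T2 D + lamm T2 D))/ln 2"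
      by (simp add: field_simps)
    also have "\<dots> = 0" using AB sumT by simp
    finally have z: "(A - lamp T1 D)/ln 2 + (B - lamm T1 D)/ln 2 + (A - lamp T2 D)/ln 2 + (B - lamm T2 D)/ln 2 = 0" .
    have "lamp T1 D + lamp T2 D = 1 - S" using sumT unfolding S_def by linarith
    hence e1: "(1-S) * log 2 A = lamp T1 D * log 2 A + lamp T2 D * log 2 A" by (metis distrib_right)
    have e2: "S * log 2 B = lamm T1 D * log 2 B + lamm T2 D * log 2 B" unfolding S_def by (simp add: distrib_right)
    show ?thesis using z e1 e2 by linarith
  qed
  also have "\<dots> \<le> - (2 * (A * log 2 A) + 2 * (B * log 2 B))"
  proof -
    have lg: "log 2 B \<le> log 2 A" using BA Bpos by simp
    have "(S - 2*B) * (log 2 A - log 2 B) \<le> 0"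
      using S2B lg by (intro mult_nonpos_nonneg) auto
    hence m: "S * log 2 A - 2*B*log 2 A - S * log 2 B + 2*B*log 2 B \<le> 0" by (simp add: algebra_simps)
    have "2*A*log 2 A = (1-2*B)*log 2 A" using AB by simp
    hence h: "2*A*log 2 A = log 2 A - 2*B*log 2 A" by (simp add: left_diff_distrib)
    have h2: "(1-S)*log 2 A = log 2 A - S*log 2 A" by (simp add: left_diff_distrib)
    show ?thesis using m h h2 by linarith
  qed
  finally show "- (lamp T1 D * log 2 (lamp T1 D) + lamm T1 D * log 2 (lamm T1 D)
           + lamp T2 D * log 2 (lamp T2 D) + lamm T2 D * log 2 (lamm T2 D))
         \<le> - (2 * (A * log 2 A) + 2 * (B * log 2 B))" .
  show "0 \<le> T1^2 - 4*D" using k1 by (smt (verit) zero_le_power2)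
  show "0 \<le> T2^2 - 4*D" using k2 by (smt (verit) zero_le_power2)
qed



lemma blk_alg1:
  fixes P Pc R Rc a1 a2 b1 b2 :: complex
  shows "(P*a1*b1)*(Pc*a1*b1) + (R*a2*b1)*(Rc*a2*b1) + ((R*a1*b2)*(Rc*a1*b2) + (P*a2*b2)*(Pc*a2*b2))
     = (a1^2*b1^2 + a2^2*b2^2)*(P*Pc) + (a2^2*b1^2+a1^2*b2^2)*(R*Rc)"
  by (simp add: algebra_simps power2_eq_square)

lemma blk_alg2:
  fixes P Pc R Rc a1 a2 b1 b2 :: complex
  shows "((P*a1*b1)*(Pc*a1*b1) + (R*a2*b1)*(Rc*a2*b1)) * ((R*a1*b2)*(Rc*a1*b2) + (P*a2*b2)*(Pc*a2*b2))
     - ((P*a1*b1)*(Rc*a1*b2) + (R*a2*b1)*(Pc*a2*b2)) * ((R*a1*b2)*(Pc*a1*b1) + (P*a2*b2)*(Rc*a2*b1))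
     = a1^2*a2^2*b1^2*b2^2*((P^2-R^2)*(Pc^2-Rc^2))"
  by (simp add: algebra_simps power2_eq_square)

lemma spec_vals:
  fixes y :: real
  defines "t \<equiv> 2*cos y*sin y" and "x \<equiv> pi/4"
  shows "(cmod (coef x y y 0 + coef x y y 3))^2 = (1+t)/2"
  "(cmod (coef x y y 0 - coef x y y 3))^2 = (1-t)/2"
  "(cmod (coef x y y 1 - coef x y y 2))^2 = (1-t)/2"
  "(cmod (coef x y y 1 + coef x y y 2))^2 = (1+t)/2"
  "(cmod ((coef x y y 0 + coef x y y 3)^2 - (coef x y y 0 - coef x y y 3)^2))^2 = 16*(1/2 - t^2/4)*(t^2/4)"
  "(cmod ((coef x y y 1 - coef x y y 2)^2 - (coef x y y 1 + coef x y y 2)^2))^2 = 16*(1/2 - t^2/4)*(t^2/4)"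
  "(cmod (coef x y y 0))^2 = 1/2 - t^2/4"
  "(cmod (coef x y y 2))^2 = t^2/4"
proof -
  define h where "h = sqrt 2 / 2"
  define c where "c = cos y"
  define s where "s = sin y"
  have h2: "h^2 = 1/2" unfolding h_def by (simp add: power_divide)
  have cs: "c^2 + s^2 = 1" unfolding c_def s_def by simp
  have hx: "cos x = h" "sin x = h" unfolding x_def h_def by (simp_all add: cos_45 sin_45)
  have co: "coef x y y 0 = Complex (h*(c*c)) (h*(s*s))" "coef x y y 1 = Complex (h*(s*s)) (h*(c*c))"
     "coef x y y 2 = Complex (h*(c*s)) (h*(s*c))" "coef x y y 3 = Complex (h*(s*c)) (h*(c*s))"
    by (simp_all add: coef_def hx c_def s_def)
  have t: "t = 2*c*s" unfolding t_def c_def s_def ..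
  have A: "c^4 + s^4 = 1 - 2*c^2*s^2"
  proof -
    have "c^4 + s^4 = (c^2+s^2)^2 - 2*c^2*s^2" by (simp add: power2_eq_square power4_eq_xxxx algebra_simps)
    thus ?thesis using cs by simp
  qed
  have "(cmod (coef x y y 0 + coef x y y 3))^2 = h^2*((c^2+s^2)*(c^2+s^2+2*c*s))"
    unfolding cmod_power2 by (simp add: co co[unfolded One_nat_def] power2_eq_square power4_eq_xxxx algebra_simps)
  thus "(cmod (coef x y y 0 + coef x y y 3))^2 = (1+t)/2" using h2 cs t by simp
  have "(cmod (coef x y y 0 - coef x y y 3))^2 = h^2*((c^2+s^2)*(c^2+s^2-2*c*s))"
    unfolding cmod_power2 by (simp add: co co[unfolded One_nat_def] power2_eq_square power4_eq_xxxx algebra_simps)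
  thus "(cmod (coef x y y 0 - coef x y y 3))^2 = (1-t)/2" using h2 cs t by simp
  have "(cmod (coef x y y 1 - coef x y y 2))^2 = h^2*((c^2+s^2)*(c^2+s^2-2*c*s))"
    unfolding cmod_power2 by (simp add: co co[unfolded One_nat_def] power2_eq_square power4_eq_xxxx algebra_simps)
  thus "(cmod (coef x y y 1 - coef x y y 2))^2 = (1-t)/2" using h2 cs t by simp
  have "(cmod (coef x y y 1 + coef x y y 2))^2 = h^2*((c^2+s^2)*(c^2+s^2+2*c*s))"
    unfolding cmod_power2 by (simp add: co co[unfolded One_nat_def] power2_eq_square power4_eq_xxxx algebra_simps)
  thus "(cmod (coef x y y 1 + coef x y y 2))^2 = (1+t)/2" using h2 cs t by simp
  have c0: "(cmod (coef x y y 0))^2 = h^2*(c^4+s^4)"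
    unfolding cmod_power2 by (simp add: co co[unfolded One_nat_def] power2_eq_square power4_eq_xxxx algebra_simps)
  thus "(cmod (coef x y y 0))^2 = 1/2 - t^2/4" using h2 A t by (simp add: power_mult_distrib)
  have c1: "(cmod (coef x y y 1))^2 = h^2*(c^4+s^4)"
    unfolding cmod_power2 by (simp add: co co[unfolded One_nat_def] power2_eq_square power4_eq_xxxx algebra_simps)
  have c2: "(cmod (coef x y y 2))^2 = h^2*(2*c^2*s^2)"
    unfolding cmod_power2 by (simp add: co co[unfolded One_nat_def] power2_eq_square power4_eq_xxxx algebra_simps)
  thus "(cmod (coef x y y 2))^2 = t^2/4" using h2 t by (simp add: power_mult_distrib)
  have c3: "(cmod (coef x y y 3))^2 = h^2*(2*c^2*s^2)"
    unfolding cmod_power2 by (simp add: co co[unfolded One_nat_def] power2_eq_square power4_eq_xxxx algebra_simps)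
  have h4: "h^2*h^2 = 1/4" unfolding h2 by simp
  have sq: "\<And>a b :: complex. a^2 - b^2 = (a-b)*(a+b)" by (simp add: algebra_simps power2_eq_square)
  have "(cmod ((coef x y y 0 + coef x y y 3)^2 - (coef x y y 0 - coef x y y 3)^2))^2
      = 16 * (cmod (coef x y y 3))^2 * (cmod (coef x y y 0))^2"
    unfolding sq norm_mult power_mult_distrib by (simp add: norm_mult power_mult_distrib)
  also have "\<dots> = 16 * (h^2*h^2) * (2*c^2*s^2) * (1 - 2*c^2*s^2)" unfolding c0 c3 A by simp
  also have "\<dots> = 16*(1/2 - t^2/4)*(t^2/4)" unfolding h4 t by (simp add: power_mult_distrib algebra_simps)
  finally show "(cmod ((coef x y y 0 + coef x y y 3)^2 - (coef x y y 0 - coef x y y 3)^2))^2 = 16*(1/2 - t^2/4)*(t^2/4)" .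
  have "(cmod ((coef x y y 1 - coef x y y 2)^2 - (coef x y y 1 + coef x y y 2)^2))^2
      = 16 * (cmod (coef x y y 2))^2 * (cmod (coef x y y 1))^2"
    unfolding sq norm_mult power_mult_distrib by (simp add: norm_mult power_mult_distrib norm_minus_commute)
  also have "\<dots> = 16 * (h^2*h^2) * (2*c^2*s^2) * (1 - 2*c^2*s^2)" unfolding c1 c2 A by simp
  also have "\<dots> = 16*(1/2 - t^2/4)*(t^2/4)" unfolding h4 t by (simp add: power_mult_distrib algebra_simps)
  finally show "(cmod ((coef x y y 1 - coef x y y 2)^2 - (coef x y y 1 + coef x y y 2)^2))^2 = 16*(1/2 - t^2/4)*(t^2/4)" .
qed

lemma blk_gen:
  fixes P Pc R Rc Q Qc S Sc ca sa cb sb F00 F33 F03 F30 F11 F22 F12 F21 :: complex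
  assumes "F00 = (P*ca*cb)*(Pc*ca*cb) + (R*sa*cb)*(Rc*sa*cb)"
  "F33 = (R*ca*sb)*(Rc*ca*sb) + (P*sa*sb)*(Pc*sa*sb)"
  "F03 = (P*ca*cb)*(Rc*ca*sb) + (R*sa*cb)*(Pc*sa*sb)"
  "F30 = (R*ca*sb)*(Pc*ca*cb) + (P*sa*sb)*(Rc*sa*cb)"
  "F11 = (Q*sa*sb)*(Qc*sa*sb) + (S*ca*sb)*(Sc*ca*sb)"
  "F22 = (S*sa*cb)*(Sc*sa*cb) + (Q*ca*cb)*(Qc*ca*cb)"
  "F12 = (Q*sa*sb)*(Sc*sa*cb) + (S*ca*sb)*(Qc*ca*cb)"
  "F21 = (S*sa*cb)*(Qc*sa*sb) + (Q*ca*cb)*(Sc*ca*sb)"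
  shows "F00 + F33 = (ca^2*cb^2 + sa^2*sb^2)*(P*Pc) + (sa^2*cb^2+ca^2*sb^2)*(R*Rc)"
    "F00*F33 - F03*F30 = ca^2*sa^2*cb^2*sb^2*((P^2-R^2)*(Pc^2-Rc^2))"
    "F11 + F22 = (sa^2*sb^2 + ca^2*cb^2)*(Q*Qc) + (ca^2*sb^2 + sa^2*cb^2)*(S*Sc)"
    "F11*F22 - F12*F21 = ca^2*sa^2*cb^2*sb^2*((Q^2-S^2)*(Qc^2-Sc^2))"
  unfolding assms by (simp_all add: algebra_simps power2_eq_square)

lemma Fl_blocks:
  fixes x y z \<alpha> \<beta> :: real
  defines "P \<equiv> coef x y z 0 + coef x y z 3" and "R \<equiv> coef x y z 0 - coef x y z 3"
  and "Q \<equiv> coef x y z 1 - coef x y z 2" and "S \<equiv> coef x y z 1 + coef x y z 2"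
  shows "Fl x y z \<alpha> \<beta> (0,0) + Fl x y z \<alpha> \<beta> (3,3) = complex_of_real
      (((cos \<alpha>)^2*(cos \<beta>)^2 + (sin \<alpha>)^2*(sin \<beta>)^2) * (cmod P)^2 + ((sin \<alpha>)^2*(cos \<beta>)^2 + (cos \<alpha>)^2*(sin \<beta>)^2) * (cmod R)^2)"
   and "Fl x y z \<alpha> \<beta> (0,0) * Fl x y z \<alpha> \<beta> (3,3) - Fl x y z \<alpha> \<beta> (0,3) * Fl x y z \<alpha> \<beta> (3,0) = complex_of_real
      ((cos \<alpha>)^2*(sin \<alpha>)^2*(cos \<beta>)^2*(sin \<beta>)^2 * (cmod (P^2 - R^2))^2)"
   and "Fl x y z \<alpha> \<beta> (1,1) + Fl x y z \<alpha> \<beta> (2,2) = complex_of_real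
      (((sin \<alpha>)^2*(sin \<beta>)^2 + (cos \<alpha>)^2*(cos \<beta>)^2) * (cmod Q)^2 + ((cos \<alpha>)^2*(sin \<beta>)^2 + (sin \<alpha>)^2*(cos \<beta>)^2) * (cmod S)^2)"
   and "Fl x y z \<alpha> \<beta> (1,1) * Fl x y z \<alpha> \<beta> (2,2) - Fl x y z \<alpha> \<beta> (1,2) * Fl x y z \<alpha> \<beta> (2,1) = complex_of_real
      ((cos \<alpha>)^2*(sin \<alpha>)^2*(cos \<beta>)^2*(sin \<beta>)^2 * (cmod (Q^2 - S^2))^2)"
proof -
  note B = blk_gen[OF Fl_entries[of x y z \<alpha> \<beta>, folded P_def R_def Q_def S_def]]
  have n: "\<And>u::complex. u * cnj u = complex_of_real ((cmod u)^2)" by (rule complex_norm_square[symmetric])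
  have n2: "\<And>u v::complex. (u^2 - v^2) * (cnj u ^2 - cnj v^2) = complex_of_real ((cmod (u^2 - v^2))^2)"
    unfolding complex_norm_square by simp
  show "Fl x y z \<alpha> \<beta> (0,0) + Fl x y z \<alpha> \<beta> (3,3) = complex_of_real
      (((cos \<alpha>)^2*(cos \<beta>)^2 + (sin \<alpha>)^2*(sin \<beta>)^2) * (cmod P)^2 + ((sin \<alpha>)^2*(cos \<beta>)^2 + (cos \<alpha>)^2*(sin \<beta>)^2) * (cmod R)^2)"
    unfolding B(1) n by simp
  show "Fl x y z \<alpha> \<beta> (0,0) * Fl x y z \<alpha> \<beta> (3,3) - Fl x y z \<alpha> \<beta> (0,3) * Fl x y z \<alpha> \<beta> (3,0) = complex_of_real
      ((cos \<alpha>)^2*(sin \<alpha>)^2*(cos \<beta>)^2*(sin \<beta>)^2 * (cmod (P^2 - R^2))^2)"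
    unfolding B(2) n2 by simp
  show "Fl x y z \<alpha> \<beta> (1,1) + Fl x y z \<alpha> \<beta> (2,2) = complex_of_real
      (((sin \<alpha>)^2*(sin \<beta>)^2 + (cos \<alpha>)^2*(cos \<beta>)^2) * (cmod Q)^2 + ((cos \<alpha>)^2*(sin \<beta>)^2 + (sin \<alpha>)^2*(cos \<beta>)^2) * (cmod S)^2)"
    unfolding B(3) n by simp
  show "Fl x y z \<alpha> \<beta> (1,1) * Fl x y z \<alpha> \<beta> (2,2) - Fl x y z \<alpha> \<beta> (1,2) * Fl x y z \<alpha> \<beta> (2,1) = complex_of_real
      ((cos \<alpha>)^2*(sin \<alpha>)^2*(cos \<beta>)^2*(sin \<beta>)^2 * (cmod (Q^2 - S^2))^2)"
    unfolding B(4) n2 by simp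
qed

lemma quad_fact:
  fixes a b :: complex
  shows "[:a*b, -(a+b), 1:] = [:-a,1:] * [:-b,1:]"
  by (simp add: algebra_simps)

lemma quad_roots:
  fixes T D :: real
  assumes "0 \<le> T^2 - 4*D"
  shows "proots [:complex_of_real D, - complex_of_real T, 1:] = {#complex_of_real (lamp T D), complex_of_real (lamm T D)#}"
proof -
  have s: "complex_of_real T = complex_of_real (lamp T D) + complex_of_real (lamm T D)"
    unfolding lamp_def lamm_def of_real_add[symmetric] by (simp add: field_simps)
  have p: "complex_of_real D = complex_of_real (lamp T D) * complex_of_real (lamm T D)"
    unfolding lamp_def lamm_def of_real_mult[symmetric] using assms
    by (simp add: field_simps power2_eq_square[symmetric])
  have eq: "[:complex_of_real D, - complex_of_real T, 1:] =
     [:- complex_of_real (lamp T D), 1:] * [:- complex_of_real (lamm T D), 1:]"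
    using quad_fact[of "complex_of_real (lamp T D)" "complex_of_real (lamm T D)"] s p by simp
  have "proots [:complex_of_real D, - complex_of_real T, 1:] =
     proots [:- complex_of_real (lamp T D), 1:] + proots [:- complex_of_real (lamm T D), 1:]"
    unfolding eq by (rule proots_mult) simp_all
  thus ?thesis by simp
qed


lemma Tid1:
  fixes a1 a2 b1 b2 t :: real
  shows "(a1^2*b1^2 + a2^2*b2^2)*((1+t)/2) + (a2^2*b1^2+a1^2*b2^2)*((1-t)/2)
     = ((a1^2+a2^2)*(b1^2+b2^2) + t*((a1^2-a2^2)*(b1^2-b2^2)))/2"
  by (simp add: field_simps algebra_simps)

lemma Tid2:
  fixes a1 a2 b1 b2 t :: real
  shows "(a2^2*b2^2 + a1^2*b1^2)*((1-t)/2) + (a1^2*b2^2+a2^2*b1^2)*((1+t)/2)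
     = ((a1^2+a2^2)*(b1^2+b2^2) - t*((a1^2-a2^2)*(b1^2-b2^2)))/2"
  by (simp add: field_simps algebra_simps)

lemma ent_val:
  fixes y \<alpha> \<beta> :: real
  assumes t0: "0 < 2*cos y*sin y" and t1: "2*cos y*sin y \<le> 1"
  defines "t \<equiv> 2*cos y*sin y"
    and "T1 \<equiv> (1+(2*cos y*sin y)*(((cos \<alpha>)^2-(sin \<alpha>)^2)*((cos \<beta>)^2-(sin \<beta>)^2)))/2"
    and "T2 \<equiv> (1-(2*cos y*sin y)*(((cos \<alpha>)^2-(sin \<alpha>)^2)*((cos \<beta>)^2-(sin \<beta>)^2)))/2"
    and "D \<equiv> 16*(cos \<alpha>)^2*(sin \<alpha>)^2*(cos \<beta>)^2*(sin \<beta>)^2*(1/2 - (2*cos y*sin y)^2/4)*((2*cos y*sin y)^2/4)"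
  shows "ent (pi/4) y y \<alpha> \<beta> = - (lamp T1 D * log 2 (lamp T1 D) + lamm T1 D * log 2 (lamm T1 D)
           + lamp T2 D * log 2 (lamp T2 D) + lamm T2 D * log 2 (lamm T2 D))"
proof -
  have ab: "(cos \<alpha>)^2 + (sin \<alpha>)^2 = 1" "(cos \<beta>)^2 + (sin \<beta>)^2 = 1" by simp_all
  note M = main_ineq[OF t0 t1 ab]
  have d1: "0 \<le> T1^2 - 4*D" using M(1) unfolding T1_def D_def .
  have d2: "0 \<le> T2^2 - 4*D" using M(2) unfolding T2_def D_def .
  note SV = spec_vals[of y, folded t_def]
  have eT1: "((cos \<alpha>)^2*(cos \<beta>)^2 + (sin \<alpha>)^2*(sin \<beta>)^2)*((1+t)/2) + ((sin \<alpha>)^2*(cos \<beta>)^2+(cos \<alpha>)^2*(sin \<beta>)^2)*((1-t)/2) = T1"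
    unfolding Tid1 ab T1_def t_def by simp
  have eT2: "((sin \<alpha>)^2*(sin \<beta>)^2 + (cos \<alpha>)^2*(cos \<beta>)^2)*((1-t)/2) + ((cos \<alpha>)^2*(sin \<beta>)^2+(sin \<alpha>)^2*(cos \<beta>)^2)*((1+t)/2) = T2"
    unfolding Tid2 ab T2_def t_def by simp
  have eD: "(cos \<alpha>)^2*(sin \<alpha>)^2*(cos \<beta>)^2*(sin \<beta>)^2*(16*(1/2 - t^2/4)*(t^2/4)) = D"
    unfolding D_def t_def by (simp add: algebra_simps)
  have cp: "char_poly (rhoBR (pi/4) y y \<alpha> \<beta>) = [:complex_of_real D, - complex_of_real T1, 1:] * [:complex_of_real D, - complex_of_real T2, 1:]"
    unfolding rho_Fl cp4[OF Fl_zero] Fl_blocks SV eT1 eT2 eD ..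
  have pr: "proots (char_poly (rhoBR (pi/4) y y \<alpha> \<beta>)) =
     {#complex_of_real (lamp T1 D), complex_of_real (lamm T1 D)#} + {#complex_of_real (lamp T2 D), complex_of_real (lamm T2 D)#}"
  proof -
    have "proots ([:complex_of_real D, - complex_of_real T1, 1:] * [:complex_of_real D, - complex_of_real T2, 1:])
      = proots [:complex_of_real D, - complex_of_real T1, 1:] + proots [:complex_of_real D, - complex_of_real T2, 1:]"
      by (rule proots_mult) simp_all
    thus ?thesis unfolding cp quad_roots[OF d1] quad_roots[OF d2] .
  qed
  show ?thesis unfolding ent_def vn_entropy_def pr by (simp add: algebra_simps)
qed


theorem proposition3:
  fixes x y z :: real
  assumes "normalized x y z" and "x = pi/4" and "y = z"
  shows "(\<forall>\<alpha>\<in>{0..pi/4}. \<forall>\<beta>\<in>{0..pi/2}. ent x y z \<alpha> \<beta> \<le> ent x y z (pi/4) (pi/4))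
    \<and> ent x y z (pi/4) (pi/4) =
        shannon [(cmod (coef x y z 0))\<^sup>2, (cmod (coef x y z 0))\<^sup>2,
                 (cmod (coef x y z 2))\<^sup>2, (cmod (coef x y z 2))\<^sup>2]"
proof -
  have x: "x = pi/4" and z: "z = y" using assms by auto
  have y0: "0 < y" and y1: "y < pi/4" using assms(1) unfolding normalized_def by auto
  have c: "0 < cos y" using y0 y1 by (intro cos_gt_zero) auto
  have s: "0 < sin y" using y0 y1 by (intro sin_gt_zero) auto
  have t0: "0 < 2*cos y*sin y" using c s by simp
  have "2*cos y*sin y = sin (2*y)" by (simp add: sin_double)
  hence t1: "2*cos y*sin y \<le> 1" by simp
  define t where "t = 2*cos y*sin y"
  define A where "A = 1/2 - t^2/4"
  define B where "B = t^2/4"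
  have bound: "ent (pi/4) y y \<alpha> \<beta> \<le> - (2 * (A * log 2 A) + 2 * (B * log 2 B))" for \<alpha> \<beta>
    unfolding ent_val[OF t0 t1] A_def B_def t_def
    using main_ineq(3)[OF t0 t1, of "cos \<alpha>" "sin \<alpha>" "cos \<beta>" "sin \<beta>"] by simp
  have h: "(cos (pi/4))^2 = (1/2::real)" "(sin (pi/4))^2 = (1/2::real)"
    by (simp_all add: cos_45 sin_45 power_divide)
  have T: "(1+(2*cos y*sin y)*(((cos (pi/4))^2-(sin (pi/4))^2)*((cos (pi/4))^2-(sin (pi/4))^2)))/2 = (1/2::real)"
    "(1-(2*cos y*sin y)*(((cos (pi/4))^2-(sin (pi/4))^2)*((cos (pi/4))^2-(sin (pi/4))^2)))/2 = (1/2::real)"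
    unfolding h by simp_all
  have D: "16*(cos (pi/4))^2*(sin (pi/4))^2*(cos (pi/4))^2*(sin (pi/4))^2*(1/2 - (2*cos y*sin y)^2/4)*((2*cos y*sin y)^2/4) = A*B"
    unfolding h A_def B_def t_def by simp
  have AB: "A + B = 1/2" unfolding A_def B_def by simp
  have BA: "B \<le> A" unfolding A_def B_def t_def using t1 t0
    by (simp add: power_le_one)
  have sq: "sqrt ((1/2)^2 - 4*(A*B)) = A - B"
  proof -
    have "(1/2::real)^2 - 4*(A*B) = (A+B)^2 - 4*(A*B)" using AB by simp
    also have "\<dots> = (A-B)^2" by (simp add: power2_eq_square algebra_simps)
    finally show ?thesis using BA by simp
  qed
  have lp: "lamp (1/2) (A*B) = A" unfolding lamp_def sq using AB by simp
  have lm: "lamm (1/2) (A*B) = B" unfolding lamm_def sq using AB by simp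
  have val: "ent (pi/4) y y (pi/4) (pi/4) = - (2 * (A * log 2 A) + 2 * (B * log 2 B))"
    unfolding ent_val[OF t0 t1] T D lp lm by simp
  have sh: "shannon [(cmod (coef (pi/4) y y 0))\<^sup>2, (cmod (coef (pi/4) y y 0))\<^sup>2,
                 (cmod (coef (pi/4) y y 2))\<^sup>2, (cmod (coef (pi/4) y y 2))\<^sup>2]
      = - (2 * (A * log 2 A) + 2 * (B * log 2 B))"
    unfolding shannon_def spec_vals(7,8)[of y] A_def B_def t_def by simp
  show ?thesis unfolding x z using bound val sh by simp
qed

end
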